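(* Let $(a_n)_n=[a_{n\varepsilon}]_{\mathrm s}$, $(b_n)_n=[b_{n\varepsilon}]_{\mathrm s}\in\widetilde{\mathbb R}_{\mathrm s}$ with $(a_n)_n\ge0$ and $(b_n)_n\ge0$, and assume that there exists $N\in\mathbb N$ such that $(a_{n+N})_n\le(b_{n+N})_n$, where $(a_{n+N})_n:=[a_{n+N,\varepsilon}]_{\mathrm s}$ and similarly for $b$. Then: (i) if the hyperseries $\sum_{n\in\widetilde{\mathbb N}}b_n$ converges, then so does $\sum_{n\in\widetilde{\mathbb N}}a_n$; (ii) if $\sum_{n\in\widetilde{\mathbb N}}a_n$ diverges to $+\infty$, then so does $\sum_{n\in\widetilde{\mathbb N}}b_n$.
   Context: Fix $I=(0,1]$ and a gauge $\rho=(\rho_\varepsilon)_{\varepsilon\in I}$ with $\rho_\varepsilon\in I$ and $\rho_\varepsilon\to0$ as $\varepsilon\to0$. "$\forall^0\varepsilon$" means "for all sufficiently small $\varepsilon\in I$". A net $(x_\varepsilon)\in\mathbb C^I$ is $\rho$-moderate ($(x_\varepsilon)\in\mathbb C_\rho$) if $\exists N\in\mathbb N\,\forall^0\varepsilon:|x_\varepsilon|\le\rho_\varepsilon^{-N}$, and $\rho$-negligible if $\forall q\in\mathbb N\,\forall^0\varepsilon:|x_\varepsilon|\le\rho_\varepsilon^q$. $\widetilde{\mathbb C}:=\mathbb C_\rho/\{\text{negligible nets}\}$ with classes $[x_\varepsilon]$; $\widetilde{\mathbb R}\subseteq\widetilde{\mathbb C}$ consists of classes of real moderate nets; $\mathrm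 d\rho:=[\rho_\varepsilon]$, $|[z_\varepsilon]|:=[|z_\varepsilon|]$. On $\widetilde{\mathbb R}$: $[x_\varepsilon]\le[y_\varepsilon]$ iff $x_\varepsilon\le y_\varepsilon+z_\varepsilon$ $\forall^0\varepsilon$ for some negligible $(z_\varepsilon)$; $x<y$ iff $\exists m\,\forall^0\varepsilon:y_\varepsilon-x_\varepsilon>\rho_\varepsilon^m$. Hypernatural numbers: $\widetilde{\mathbb N}:=\{[n_\varepsilon]\in\widetilde{\mathbb R}:n_\varepsilon\in\mathbb N\ \forall\varepsilon\}$; for each $N\in\widetilde{\mathbb N}$ a representative $(\mathrm{ni}(N)_\varepsilon)$ with all $\mathrm{ni}(N)_\varepsilon\in\mathbb N$ is fixed. Hyperlimit: for a map $n\in\widetilde{\mathbb N}\mapsto a_n\in\widetilde{\mathbb C}$, $l=\lim_{n\in\widetilde{\mathbb N}}a_n$ means $\forall q\in\mathbb N\,\exists M\in\widetilde{\mathbb N}\,\forall n\in\widetilde{\mathbb N}:n\ge M\Rightarrow|a_n-l|<\mathrm d\rho^q$. Hyperseries: a net $(a_{n\varepsilon})_{n\in\mathbb N,\varepsilon\in I}$ of complex numbers is moderate over hypersums if for every $N\in\widetilde{\mathbb N}$ the net $(\sum_{n=0}^{\mathrm{ni}(N)_\varepsilon}a_{n\varepsilon})_\varepsilon$ is $\rho$-moderate; two such nets $(a_{n\varepsilon}),(\bar a_{n\varepsilon})$ are equivalent if for all $N,M\in\widetilde{\mathbb N}$ the net $(\sum_{n=\mathrm{ni}(N)_\varepsilon}^{\mathrm{ni}(M)_\varepsilon}(a_{n\varepsilon}-\bar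 a_{n\varepsilon}))_\varepsilon$ is negligible. The quotient is $\widetilde{\mathbb C}_{\mathrm s}$ (resp. $\widetilde{\mathbb R}_{\mathrm s}$ for real nets), with classes $(a_n)_n=[a_{n\varepsilon}]_{\mathrm s}$. For $N,M\in\widetilde{\mathbb N}$, $\sum_{n=N}^Ma_n:=[\sum_{n=\mathrm{ni}(N)_\varepsilon}^{\mathrm{ni}(M)_\varepsilon}a_{n\varepsilon}]$ (empty sums equal $0$). The hyperseries $\sum_{n\in\widetilde{\mathbb N}}a_n$ converges to $s$ if $s=\lim_{N\in\widetilde{\mathbb N}}\sum_{n=0}^Na_n$ exists in $\widetilde{\mathbb C}$; it diverges to $+\infty$ if for every $K\in\widetilde{\mathbb R}$ there is $M\in\widetilde{\mathbb N}$ with $\sum_{n=0}^Na_n>K$ for all $N\in\widetilde{\mathbb N}_{\ge M}$. Order on $\widetilde{\mathbb R}_{\mathrm s}$: $(a_n)_n\le(b_n)_n$ iff $\sum_{n=N}^Ma_n\le\sum_{n=N}^Mb_n$ in $\widetilde{\mathbb R}$ for all $N,M\in\widetilde{\mathbb N}$; $(a_n)_n\ge0$ means $0\le(a_n)_n$. *)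

theory Defs
  imports Complex_Main
begin

text \<open>Nets are functions on the reals; only their values on I = (0,1] near 0 matter.
  "for all sufficiently small eps in I" is the filter at_right 0.
  The gauge rho is a parameter of all notions.\<close>

definition gauge :: "(real \<Rightarrow> real) \<Rightarrow> bool" where
  "gauge rho \<longleftrightarrow> (\<forall>e\<in>{0<..1}. rho e \<in> {0<..1}) \<and> (rho \<longlongrightarrow> 0) (at_right 0)"

definition rmoderate :: "(real \<Rightarrow> real) \<Rightarrow> (real \<Rightarrow> 'a::real_normed_vector) \<Rightarrow> bool" where
  "rmoderate rho x \<longleftrightarrow> (\<exists>N::nat. \<forall>\<^sub>F e in at_right 0. norm (x e) \<le> 1 / rho e ^ N)"

definition rnegligible :: "(real \<Rightarrow> real) \<Rightarrow> (real \<Rightarrow> 'a::real_normed_vector) \<Rightarrow> bool" where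
  "rnegligible rho x \<longleftrightarrow> (\<forall>q::nat. \<forall>\<^sub>F e in at_right 0. norm (x e) \<le> rho e ^ q)"

definition rle :: "(real \<Rightarrow> real) \<Rightarrow> (real \<Rightarrow> real) \<Rightarrow> (real \<Rightarrow> real) \<Rightarrow> bool" where
  "rle rho x y \<longleftrightarrow> (\<exists>z. rnegligible rho z \<and> (\<forall>\<^sub>F e in at_right 0. x e \<le> y e + z e))"

definition rless :: "(real \<Rightarrow> real) \<Rightarrow> (real \<Rightarrow> real) \<Rightarrow> (real \<Rightarrow> real) \<Rightarrow> bool" where
  "rless rho x y \<longleftrightarrow> (\<exists>m::nat. \<forall>\<^sub>F e in at_right 0. y e - x e > rho e ^ m)"

definition hypernat :: "(real \<Rightarrow> real) \<Rightarrow> (real \<Rightarrow> nat) \<Rightarrow> bool" where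
  "hypernat rho N \<longleftrightarrow> rmoderate rho (\<lambda>e. real (N e))"

definition hsum :: "(nat \<Rightarrow> real \<Rightarrow> real) \<Rightarrow> (real \<Rightarrow> nat) \<Rightarrow> (real \<Rightarrow> nat) \<Rightarrow> real \<Rightarrow> real" where
  "hsum a N M = (\<lambda>e. \<Sum>n\<in>{N e..M e}. a n e)"

text \<open>Moderate over hypersums (membership in the real hyperseries space).\<close>
definition hs_moderate :: "(real \<Rightarrow> real) \<Rightarrow> (nat \<Rightarrow> real \<Rightarrow> real) \<Rightarrow> bool" where
  "hs_moderate rho a \<longleftrightarrow> (\<forall>N. hypernat rho N \<longrightarrow> rmoderate rho (hsum a (\<lambda>_. 0) N))"

definition hs_le :: "(real \<Rightarrow> real) \<Rightarrow> (nat \<Rightarrow> real \<Rightarrow> real) \<Rightarrow> (nat \<Rightarrow> real \<Rightarrow> real) \<Rightarrow> bool" where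
  "hs_le rho a b \<longleftrightarrow> (\<forall>N M. hypernat rho N \<longrightarrow> hypernat rho M \<longrightarrow> rle rho (hsum a N M) (hsum b N M))"

definition hyperlim :: "(real \<Rightarrow> real) \<Rightarrow> ((real \<Rightarrow> nat) \<Rightarrow> real \<Rightarrow> complex) \<Rightarrow> (real \<Rightarrow> complex) \<Rightarrow> bool" where
  "hyperlim rho s l \<longleftrightarrow> (\<forall>q::nat. \<exists>M. hypernat rho M \<and>
      (\<forall>n. hypernat rho n \<longrightarrow> rle rho (\<lambda>e. real (M e)) (\<lambda>e. real (n e)) \<longrightarrow>
           rless rho (\<lambda>e. cmod (s n e - l e)) (\<lambda>e. rho e ^ q)))"

definition hs_converges :: "(real \<Rightarrow> real) \<Rightarrow> (nat \<Rightarrow> real \<Rightarrow> real) \<Rightarrow> bool" where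
  "hs_converges rho a \<longleftrightarrow> (\<exists>l. rmoderate rho l \<and>
      hyperlim rho (\<lambda>N e. complex_of_real (hsum a (\<lambda>_. 0) N e)) l)"

definition hs_diverges_pinf :: "(real \<Rightarrow> real) \<Rightarrow> (nat \<Rightarrow> real \<Rightarrow> real) \<Rightarrow> bool" where
  "hs_diverges_pinf rho a \<longleftrightarrow> (\<forall>K. rmoderate rho K \<longrightarrow> (\<exists>M. hypernat rho M \<and>
      (\<forall>N. hypernat rho N \<longrightarrow> rle rho (\<lambda>e. real (M e)) (\<lambda>e. real (N e)) \<longrightarrow>
           rless rho K (hsum a (\<lambda>_. 0) N))))"

end

theory Submission
  imports Defs
begin

abbreviation AR :: "real filter" where "AR \<equiv> at_right 0"

lemma ev_small:
  assumes "gauge rho" "0 < c"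
  shows "eventually (\<lambda>e. 0 < rho e \<and> rho e \<le> 1/2 \<and> rho e < c) AR"
proof -
  have "eventually (\<lambda>e. e \<in> {0<..1::real}) AR"
    unfolding eventually_at_right_field by (rule exI[of _ 1]) auto
  moreover have "eventually (\<lambda>e. rho e < min c (1/2)) AR"
    using assms unfolding gauge_def by (intro order_tendstoD(2)) auto
  ultimately show ?thesis
    by eventually_elim (use assms in \<open>auto simp: gauge_def\<close>)
qed

lemma ev_G: "gauge rho \<Longrightarrow> eventually (\<lambda>e. 0 < rho e \<and> rho e \<le> 1/2) AR"
  by (rule eventually_mono[OF ev_small[of rho 1]]) auto

lemma pw_mono: "0 < (r::real) \<Longrightarrow> r \<le> 1 \<Longrightarrow> K \<le> K' \<Longrightarrow> 1 / r ^ K \<le> 1 / r ^ K'"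
  by (simp add: frac_le power_decreasing)

lemma pw_ge1: "0 < (r::real) \<Longrightarrow> r \<le> 1 \<Longrightarrow> 1 \<le> 1 / r ^ K"
  by (simp add: power_le_one)

lemma pw_double: "0 < (r::real) \<Longrightarrow> r \<le> 1/2 \<Longrightarrow> 2 / r ^ K \<le> 1 / r ^ Suc K"
  by (simp add: field_simps)

lemma pw_le1: "0 < (r::real) \<Longrightarrow> r \<le> 1 \<Longrightarrow> r ^ q \<le> 1"
  by (simp add: power_le_one)

lemma ceil_bound:
  assumes "0 < (r::real)" "r \<le> 1/2"
  shows "1 / r ^ K \<le> real (nat \<lceil>1 / r ^ K\<rceil>)" "real (nat \<lceil>1 / r ^ K\<rceil>) \<le> 1 / r ^ Suc K"
proof -
  have g: "1 \<le> 1 / r ^ K" using pw_ge1[of r K] assms by simp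
  show "1 / r ^ K \<le> real (nat \<lceil>1 / r ^ K\<rceil>)" using g
    by (metis le_nat_iff of_nat_le_iff le_of_int_ceiling nat_le_iff of_int_of_nat_eq order.trans order_refl ceiling_le_iff nat_ceiling_le_eq)
  have "real (nat \<lceil>1 / r ^ K\<rceil>) \<le> 1 / r ^ K + 1" using g by linarith
  also have "\<dots> \<le> 2 / r ^ K" using g by simp
  also have "\<dots> \<le> 1 / r ^ Suc K" using pw_double assms by blast
  finally show "real (nat \<lceil>1 / r ^ K\<rceil>) \<le> 1 / r ^ Suc K" .
qed


lemma rmod_le:
  assumes "rmoderate rho x" "eventually (\<lambda>e. norm (y e) \<le> norm (x e)) AR"
  shows "rmoderate rho y"
proof -
  obtain N where "eventually (\<lambda>e. norm (x e) \<le> 1 / rho e ^ N) AR"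
    using assms(1) unfolding rmoderate_def by blast
  with assms(2) have "eventually (\<lambda>e. norm (y e) \<le> 1 / rho e ^ N) AR"
    by eventually_elim linarith
  thus ?thesis unfolding rmoderate_def by blast
qed

lemma rmod_add:
  assumes "gauge rho" "rmoderate rho (x::real\<Rightarrow>real)" "rmoderate rho y"
  shows "rmoderate rho (\<lambda>e. x e + y e)"
proof -
  obtain N where N: "eventually (\<lambda>e. norm (x e) \<le> 1 / rho e ^ N) AR"
    using assms(2) unfolding rmoderate_def by blast
  obtain M where M: "eventually (\<lambda>e. norm (y e) \<le> 1 / rho e ^ M) AR"
    using assms(3) unfolding rmoderate_def by blast
  have "eventually (\<lambda>e. norm (x e + y e) \<le> 1 / rho e ^ Suc (N + M)) AR"
    using N M ev_G[OF assms(1)]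
  proof eventually_elim
    case (elim e)
    have "norm (x e + y e) \<le> 1 / rho e ^ (N + M) + 1 / rho e ^ (N + M)"
    proof -
      have "norm (x e + y e) \<le> norm (x e) + norm (y e)" by (rule norm_triangle_ineq)
      moreover have "1 / rho e ^ N \<le> 1 / rho e ^ (N + M)" "1 / rho e ^ M \<le> 1 / rho e ^ (N + M)"
        using elim by (auto intro!: pw_mono)
      ultimately show ?thesis using elim by linarith
    qed
    also have "\<dots> \<le> 1 / rho e ^ Suc (N + M)" using pw_double[of "rho e" "N+M"] elim by simp
    finally show ?case .
  qed
  thus ?thesis unfolding rmoderate_def by blast
qed

lemma rmod_const:
  assumes "gauge rho" shows "rmoderate rho (\<lambda>e. real c)"
proof -
  have "eventually (\<lambda>e. norm (real c) \<le> 1 / rho e ^ c) AR"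
    using ev_G[OF assms]
  proof eventually_elim
    case (elim e)
    have "c < 2 ^ c" by (rule less_exp)
    hence "real c \<le> 2 ^ c" by (metis less_imp_le of_nat_le_iff of_nat_numeral of_nat_power)
    also have "(2::real) ^ c \<le> (1 / rho e) ^ c"
      using elim by (intro power_mono) (auto simp: field_simps)
    finally show ?case by (simp add: power_one_over)
  qed
  thus ?thesis unfolding rmoderate_def by blast
qed

lemma rmod_abs: "rmoderate rho x \<Longrightarrow> rmoderate rho (\<lambda>e. \<bar>x e\<bar>::real)"
  by (erule rmod_le) (rule always_eventually, simp)

lemma hypernat_le: "hypernat rho N \<Longrightarrow> eventually (\<lambda>e. M e \<le> N e) AR \<Longrightarrow> hypernat rho M"
  unfolding hypernat_def by (erule rmod_le) (erule eventually_mono, simp)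

lemma hypernat_const: "gauge rho \<Longrightarrow> hypernat rho (\<lambda>e. c)"
  unfolding hypernat_def by (rule rmod_const)

lemma hypernat_add: "gauge rho \<Longrightarrow> hypernat rho N \<Longrightarrow> hypernat rho M \<Longrightarrow> hypernat rho (\<lambda>e. N e + M e)"
  unfolding hypernat_def using rmod_add[of rho "\<lambda>e. real (N e)" "\<lambda>e. real (M e)"] by simp

lemma hypernat_max: "gauge rho \<Longrightarrow> hypernat rho N \<Longrightarrow> hypernat rho M \<Longrightarrow> hypernat rho (\<lambda>e. max (N e) (M e))"
  by (rule hypernat_le[OF hypernat_add[of rho N M]]) (auto intro: always_eventually)

lemma hypernat_diff: "hypernat rho N \<Longrightarrow> hypernat rho (\<lambda>e. N e - c)"
  by (rule hypernat_le) (auto intro: always_eventually)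

lemma hypernat_ev_bound: "hypernat rho N \<Longrightarrow> \<exists>k. eventually (\<lambda>e. real (N e) \<le> 1 / rho e ^ k) AR"
  unfolding hypernat_def rmoderate_def by auto

lemma hypernat_ceil: assumes "gauge rho" shows "hypernat rho (\<lambda>e. nat \<lceil>1 / rho e ^ K\<rceil>)"
proof -
  have "eventually (\<lambda>e. norm (real (nat \<lceil>1 / rho e ^ K\<rceil>)) \<le> 1 / rho e ^ Suc K) AR"
    using ev_G[OF assms]
  proof eventually_elim
    case (elim e)
    then show ?case using ceil_bound(2)[of "rho e" K] by (simp only: norm_of_nat)
  qed
  thus ?thesis unfolding hypernat_def rmoderate_def by blast
qed

lemma rle_ev: assumes "rle rho x y" shows "eventually (\<lambda>e. x e \<le> y e + rho e ^ q) AR"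
proof -
  obtain z where z: "rnegligible rho z" "eventually (\<lambda>e. x e \<le> y e + z e) AR"
    using assms unfolding rle_def by blast
  have "eventually (\<lambda>e. norm (z e) \<le> rho e ^ q) AR" using z(1) unfolding rnegligible_def by blast
  with z(2) show ?thesis by eventually_elim auto
qed

lemma rle_nat_ev: assumes "gauge rho" "rle rho (\<lambda>e. real (M e)) (\<lambda>e. real (N e))"
  shows "eventually (\<lambda>e. M e \<le> N e) AR"
  using rle_ev[OF assms(2), of 1] ev_G[OF assms(1)]
proof eventually_elim
  case (elim e)
  hence "real (M e) < real (N e) + 1" by simp
  thus ?case by linarith
qed

lemma rless_ev: assumes "gauge rho" "rless rho x y" shows "eventually (\<lambda>e. x e < y e) AR"
proof -
  obtain m where "eventually (\<lambda>e. y e - x e > rho e ^ m) AR" using assms(2) unfolding rless_def by blast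
  with ev_G[OF assms(1)] show ?thesis
  proof eventually_elim
    case (elim e)
    have "0 < rho e ^ m" using elim by simp
    thus ?case using elim by linarith
  qed
qed

lemma rle_refl_nat: assumes "gauge rho" "eventually (\<lambda>e. x e \<le> y e) AR" shows "rle rho x y"
proof -
  have "eventually (\<lambda>e. norm (0::real) \<le> rho e ^ q) AR" for q
    using ev_G[OF assms(1)] by eventually_elim simp
  hence neg: "rnegligible rho (\<lambda>e. 0::real)" unfolding rnegligible_def by blast
  show ?thesis unfolding rle_def apply (rule exI[of _ "\<lambda>e. 0"]) using neg assms(2) by simp
qed

lemma ubiq:
  assumes "gauge rho" "\<And>N. hypernat rho N \<Longrightarrow> eventually (\<lambda>e. P (N e) e) AR"
  shows "eventually (\<lambda>e. \<forall>n. real n \<le> 1 / rho e ^ k \<longrightarrow> P n e) AR"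
proof -
  define Q where "Q e \<longleftrightarrow> (\<exists>n. real n \<le> 1 / rho e ^ k \<and> \<not> P n e)" for e
  define N where "N e = (if Q e then SOME n. real n \<le> 1 / rho e ^ k \<and> \<not> P n e else 0)" for e
  have N: "real (N e) \<le> 1 / rho e ^ k \<and> \<not> P (N e) e" if "Q e" for e
  proof -
    have ex: "\<exists>n. real n \<le> 1 / rho e ^ k \<and> \<not> P n e" using that by (simp add: Q_def)
    show ?thesis using someI_ex[OF ex] that by (simp add: N_def)
  qed
  have "eventually (\<lambda>e. norm (real (N e)) \<le> 1 / rho e ^ k) AR"
    using ev_G[OF assms(1)]
  proof eventually_elim
    case (elim e)
    show ?case
    proof (cases "Q e")
      case True then show ?thesis using N by simp
    next
      case False then show ?thesis using elim by (simp add: N_def)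
    qed
  qed
  hence "hypernat rho N" unfolding hypernat_def rmoderate_def by blast
  from assms(2)[OF this] show ?thesis
  proof eventually_elim
    case (elim e)
    have "\<not> Q e" using N elim by blast
    thus ?case unfolding Q_def by blast
  qed
qed

lemma ubiq2:
  assumes "gauge rho" "\<And>N M. hypernat rho N \<Longrightarrow> hypernat rho M \<Longrightarrow> eventually (\<lambda>e. P (N e) (M e) e) AR"
  shows "eventually (\<lambda>e. \<forall>n m. real n \<le> 1 / rho e ^ k \<longrightarrow> real m \<le> 1 / rho e ^ k \<longrightarrow> P n m e) AR"
proof -
  define R where "R e p \<longleftrightarrow> real (fst p) \<le> 1 / rho e ^ k \<and> real (snd p) \<le> 1 / rho e ^ k \<and> \<not> P (fst p) (snd p) e" for e p
  define Q where "Q e \<longleftrightarrow> (\<exists>p. R e p)" for e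
  define NM where "NM e = (if Q e then SOME p. R e p else (0,0))" for e
  have NM: "R e (NM e)" if "Q e" for e
  proof -
    have ex: "\<exists>p. R e p" using that by (simp add: Q_def)
    show ?thesis using someI_ex[OF ex] that by (simp add: NM_def)
  qed
  have "eventually (\<lambda>e. norm (real (fst (NM e))) \<le> 1 / rho e ^ k \<and> norm (real (snd (NM e))) \<le> 1 / rho e ^ k) AR"
    using ev_G[OF assms(1)]
  proof eventually_elim
    case (elim e)
    show ?case
    proof (cases "Q e")
      case True then show ?thesis using NM[of e] by (simp add: R_def)
    next
      case False then show ?thesis using elim by (simp add: NM_def)
    qed
  qed
  hence "eventually (\<lambda>e. norm (real (fst (NM e))) \<le> 1 / rho e ^ k) AR"
    and "eventually (\<lambda>e. norm (real (snd (NM e))) \<le> 1 / rho e ^ k) AR"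
    by (eventually_elim, simp)+
  hence 1: "hypernat rho (\<lambda>e. fst (NM e))" and 2: "hypernat rho (\<lambda>e. snd (NM e))"
    unfolding hypernat_def rmoderate_def by blast+
  from assms(2)[OF 1 2] show ?thesis
  proof eventually_elim
    case (elim e)
    have "\<not> Q e" using NM[of e] elim by (auto simp: R_def)
    thus ?case unfolding Q_def R_def by auto
  qed
qed

lemma complete:
  fixes S :: "nat \<Rightarrow> real \<Rightarrow> real"
  assumes g: "gauge rho"
   and C: "\<And>q. \<exists>K. \<forall>k. eventually (\<lambda>e. \<forall>n m. 1/rho e^K \<le> real n \<longrightarrow> real n \<le> 1/rho e^k \<longrightarrow>
             1/rho e^K \<le> real m \<longrightarrow> real m \<le> 1/rho e^k \<longrightarrow> \<bar>S m e - S n e\<bar> \<le> rho e^q) AR"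
   and H: "\<And>N. hypernat rho N \<Longrightarrow> rmoderate rho (\<lambda>e. S (N e) e)"
  shows "\<exists>l. rmoderate rho l \<and> (\<forall>q. \<exists>K. \<forall>k. eventually (\<lambda>e. \<forall>n. 1/rho e^K \<le> real n \<longrightarrow>
             real n \<le> 1/rho e^k \<longrightarrow> \<bar>S n e - l e\<bar> \<le> rho e^q) AR)"
proof -
  define P where "P q K k e \<longleftrightarrow> (\<forall>n m. 1/rho e^K \<le> real n \<longrightarrow> real n \<le> 1/rho e^k \<longrightarrow>
             1/rho e^K \<le> real m \<longrightarrow> real m \<le> 1/rho e^k \<longrightarrow> \<bar>S m e - S n e\<bar> \<le> rho e^q)" for q K k e
  have Pmono: "P q K' k e" if "P q K k e" "K \<le> K'" "0 < rho e" "rho e \<le> 1" for q K K' k e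
  proof -
    have "1/rho e^K \<le> 1/rho e^K'" using that by (intro pw_mono) auto
    thus ?thesis using that(1) unfolding P_def by (meson order_trans)
  qed
  have "\<forall>q. \<exists>K. \<forall>k. eventually (P q K k) AR" using C unfolding P_def by blast
  then obtain Kf where Kf: "\<And>q k. eventually (P q (Kf q) k) AR" by metis
  define K' where "K' q = (\<Sum>i\<le>q. Kf i) + q" for q
  have K'ge: "Kf q \<le> K' q" for q
  proof -
    have "Kf q \<le> (\<Sum>i\<le>q. Kf i)" by (rule member_le_sum) auto
    thus ?thesis unfolding K'_def by simp
  qed
  have K'suc: "Suc (K' q) \<le> K' (Suc q)" for q unfolding K'_def by simp
  have K'mono: "K' q \<le> K' j" if "q \<le> j" for q j
    using lift_Suc_mono_le[of K', OF _ that] K'suc by (meson Suc_leD)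
  have K'id: "q \<le> K' q" for q unfolding K'_def by simp
  have evP: "eventually (\<lambda>e. P q (K' q) k e \<and> 0 < rho e \<and> rho e \<le> 1/2) AR" for q k
    using Kf[of q k] ev_G[OF g]
    by eventually_elim (use Pmono K'ge in auto)
  have "\<forall>q k. \<exists>d>0. \<forall>e>0. e < d \<longrightarrow> P q (K' q) k e \<and> 0 < rho e \<and> rho e \<le> 1/2"
    using evP unfolding eventually_at_right_field by blast
  then obtain d where d: "\<And>q k. d q k > 0"
    "\<And>q k e. 0 < e \<Longrightarrow> e < d q k \<Longrightarrow> P q (K' q) k e \<and> 0 < rho e \<and> rho e \<le> 1/2"
    by metis
  define D where "D j = min (1 / real (Suc j)) (Min ((\<lambda>(q,i). d q (K' (Suc i))) ` ({..j} \<times> {..j})))" for j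
  have D_pos: "0 < D j" for j
    unfolding D_def using d(1) by (auto simp: Min_gr_iff)
  have D_le1: "D j \<le> 1 / real (Suc j)" for j unfolding D_def by simp
  have D_le_d: "D j \<le> d q (K' (Suc j))" if "q \<le> j" for q j
  proof -
    have "Min ((\<lambda>(q,i). d q (K' (Suc i))) ` ({..j} \<times> {..j})) \<le> d q (K' (Suc j))"
      by (rule Min_le) (use that in auto)
    thus ?thesis unfolding D_def by simp
  qed
  have rhoD: "0 < rho e \<and> rho e \<le> 1/2" if "0 < e" "e < D j" for e j
    using d(2)[of e 0 "K' (Suc j)"] D_le_d[of 0 j] that by auto
  define J where "J e = Max {j. e < D j}" for e
  have Jfin: "finite {j. e < D j}" if "0 < e" for e
  proof (rule finite_subset)
    show "{j. e < D j} \<subseteq> {..nat \<lceil>1/e\<rceil>}"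
    proof
      fix j assume "j \<in> {j. e < D j}"
      hence "e < 1 / real (Suc j)" using D_le1[of j] by auto
      hence "real (Suc j) < 1 / e" using that by (simp add: field_simps)
      thus "j \<in> {..nat \<lceil>1/e\<rceil>}" by simp linarith
    qed
  qed simp
  have Jge: "j \<le> J e" and Jin: "e < D (J e)" if "0 < e" "e < D j" for e j
  proof -
    show "j \<le> J e" unfolding J_def using Jfin[OF that(1)] that(2) by (intro Max_ge) auto
    have "J e \<in> {j. e < D j}" unfolding J_def using Jfin[OF that(1)] that(2) by (intro Max_in) auto
    thus "e < D (J e)" by simp
  qed
  define nu where "nu e = nat \<lceil>1/rho e ^ K' (J e)\<rceil>" for e
  define l where "l e = S (nu e) e" for e
  have key: "\<bar>S n e - l e\<bar> \<le> rho e ^ q"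
    if e: "0 < e" "e < D j0" and q: "q \<le> j0" and n: "1/rho e^(K' q) \<le> real n" "real n \<le> 1/rho e^(K' (Suc (J e)))"
    for e j0 q n
  proof -
    let ?j = "J e"
    have j0: "j0 \<le> ?j" using Jge[OF e] .
    have eD: "e < D ?j" using Jin[OF e] .
    have "e < d q (K' (Suc ?j))" using eD D_le_d[of q ?j] q j0 by auto
    from d(2)[OF e(1) this] have PP: "P q (K' q) (K' (Suc ?j)) e" and r: "0 < rho e" "rho e \<le> 1/2" by auto
    have nu1: "1/rho e^(K' ?j) \<le> real (nu e)" "real (nu e) \<le> 1/rho e^(Suc (K' ?j))"
      unfolding nu_def using ceil_bound[OF r] by auto
    have "1/rho e^(K' q) \<le> 1/rho e^(K' ?j)" using r q j0 by (intro pw_mono K'mono) auto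
    moreover have "1/rho e^(Suc (K' ?j)) \<le> 1/rho e^(K' (Suc ?j))" using r K'suc by (intro pw_mono) auto
    ultimately have "\<bar>S (nu e) e - S n e\<bar> \<le> rho e ^ q"
      using PP n nu1 unfolding P_def by (meson order_trans)
    thus ?thesis unfolding l_def by (simp add: abs_minus_commute)
  qed
  have conv: "\<exists>K. \<forall>k. eventually (\<lambda>e. \<forall>n. 1/rho e^K \<le> real n \<longrightarrow>
             real n \<le> 1/rho e^k \<longrightarrow> \<bar>S n e - l e\<bar> \<le> rho e^q) AR" for q
  proof (intro exI allI)
    fix k
    have "eventually (\<lambda>e. 0 < e \<and> e < D (max q k)) AR"
      unfolding eventually_at_right_field using D_pos by blast
    thus "eventually (\<lambda>e. \<forall>n. 1/rho e^(K' q) \<le> real n \<longrightarrow>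
             real n \<le> 1/rho e^k \<longrightarrow> \<bar>S n e - l e\<bar> \<le> rho e^q) AR"
    proof eventually_elim
      case (elim e)
      show ?case
      proof (intro allI impI)
        fix n assume n: "1/rho e^(K' q) \<le> real n" "real n \<le> 1/rho e^k"
        have r: "0 < rho e" "rho e \<le> 1/2" using rhoD elim by blast+
        have "k \<le> K' (Suc (J e))"
          using Jge[of e "max q k"] elim K'id[of "Suc (J e)"] by auto
        hence "1/rho e^k \<le> 1/rho e^(K' (Suc (J e)))" using r by (intro pw_mono) auto
        thus "\<bar>S n e - l e\<bar> \<le> rho e^q" using key[of e "max q k" q n] elim n by auto
      qed
    qed
  qed
  define nu0 where "nu0 e = nat \<lceil>1/rho e ^ K' 0\<rceil>" for e
  have "hypernat rho nu0" unfolding nu0_def by (rule hypernat_ceil[OF g])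
  from H[OF this] obtain Nm where Nm: "eventually (\<lambda>e. norm (S (nu0 e) e) \<le> 1 / rho e ^ Nm) AR"
    unfolding rmoderate_def by blast
  have "eventually (\<lambda>e. 0 < e \<and> e < D 0) AR"
    unfolding eventually_at_right_field using D_pos by blast
  with Nm have "eventually (\<lambda>e. norm (l e) \<le> 1 / rho e ^ Suc Nm) AR"
  proof eventually_elim
    case (elim e)
    have r: "0 < rho e" "rho e \<le> 1/2" using rhoD elim by blast+
    have nb: "1/rho e^(K' 0) \<le> real (nu0 e)" "real (nu0 e) \<le> 1/rho e^(Suc (K' 0))"
      unfolding nu0_def using ceil_bound[OF r] by auto
    have "Suc (K' 0) \<le> K' (Suc (J e))" using K'suc[of 0] K'mono[of 1 "Suc (J e)"] by auto
    hence "1/rho e^(Suc (K' 0)) \<le> 1/rho e^(K' (Suc (J e)))" using r by (intro pw_mono) auto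
    hence "\<bar>S (nu0 e) e - l e\<bar> \<le> rho e ^ 0" using key[of e 0 0 "nu0 e"] elim nb by auto
    hence "norm (l e) \<le> 1 / rho e ^ Nm + 1" using elim by auto
    also have "\<dots> \<le> 2 / rho e ^ Nm"
    proof -
      have g1: "1 \<le> 1 / rho e ^ Nm" by (rule pw_ge1) (use r in auto)
      have "2 / rho e ^ Nm = 1 / rho e ^ Nm + 1 / rho e ^ Nm" by (simp add: field_simps)
      thus ?thesis using g1 by linarith
    qed
    also have "\<dots> \<le> 1 / rho e ^ Suc Nm" using pw_double r by blast
    finally show ?case .
  qed
  hence "rmoderate rho l" unfolding rmoderate_def by blast
  with conv show ?thesis by blast
qed

lemma pw_shift:
  assumes "0 < (r::real)" "r \<le> 1/2"
  shows "r ^ (q + j) \<le> r ^ q / 2 ^ j"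
proof -
  have "r ^ j \<le> (1/2) ^ j" using assms by (intro power_mono) auto
  hence "r ^ q * r ^ j \<le> r ^ q * (1/2) ^ j" using assms by (intro mult_left_mono) auto
  thus ?thesis by (simp add: power_add power_one_over)
qed

lemma sum_split0:
  fixes f :: "nat \<Rightarrow> real"
  assumes "n \<le> n'"
  shows "(\<Sum>i\<in>{0..n'}. f i) = (\<Sum>i\<in>{0..n}. f i) + (\<Sum>i\<in>{Suc n..n'}. f i)"
  using sum.ub_add_nat[of 0 n f "n' - n"] assms by simp

lemma sum_shift:
  fixes f :: "nat \<Rightarrow> real" and m n k :: nat
  shows "(\<Sum>j\<in>{m..n}. f (j + k)) = (\<Sum>i\<in>{m+k..n+k}. (f i :: real))"
  using sum.shift_bounds_cl_nat_ivl[of f m k n] by simp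

lemma hsum_zero: "hsum (\<lambda>n e. 0) N M = (\<lambda>e. 0)"
  by (simp add: hsum_def)

lemma hs_le_ev:
  assumes "hs_le rho a b" "hypernat rho N" "hypernat rho M"
  shows "eventually (\<lambda>e. (\<Sum>i\<in>{N e..M e}. a i e) \<le> (\<Sum>i\<in>{N e..M e}. b i e) + rho e ^ q) AR"
  using rle_ev[of rho "hsum a N M" "hsum b N M" q] assms unfolding hs_le_def hsum_def by blast

lemma hs_le_ev0:
  assumes "hs_le rho (\<lambda>n e. 0) b" "hypernat rho N" "hypernat rho M"
  shows "eventually (\<lambda>e. - (rho e ^ q) \<le> (\<Sum>i\<in>{N e..M e}. b i e)) AR"
  using hs_le_ev[OF assms, of q] by eventually_elim simp

lemma part2:
  fixes a b :: "nat \<Rightarrow> real \<Rightarrow> real"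
  assumes g: "gauge rho" and ma: "hs_moderate rho a"
    and pa: "hs_le rho (\<lambda>n e. 0) a" and pb: "hs_le rho (\<lambda>n e. 0) b"
    and sh: "hs_le rho (\<lambda>n e. a (n + N0) e) (\<lambda>n e. b (n + N0) e)"
    and dv: "hs_diverges_pinf rho a"
  shows "hs_diverges_pinf rho b"
  unfolding hs_diverges_pinf_def
proof (intro allI impI)
  fix K :: "real \<Rightarrow> real" assume K: "rmoderate rho K"
  define A0 where "A0 e = (\<Sum>i\<in>{0..N0}. a i e)" for e
  have "rmoderate rho A0"
    using ma hypernat_const[OF g, of N0] unfolding hs_moderate_def hsum_def A0_def by auto
  hence K': "rmoderate rho (\<lambda>e. K e + \<bar>A0 e\<bar>)" by (intro rmod_add[OF g K] rmod_abs)
  from dv K' obtain M where M: "hypernat rho M"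
    "\<And>N. hypernat rho N \<Longrightarrow> rle rho (\<lambda>e. real (M e)) (\<lambda>e. real (N e)) \<Longrightarrow>
       rless rho (\<lambda>e. K e + \<bar>A0 e\<bar>) (hsum a (\<lambda>_. 0) N)"
    unfolding hs_diverges_pinf_def by blast
  show "\<exists>M. hypernat rho M \<and> (\<forall>N. hypernat rho N \<longrightarrow> rle rho (\<lambda>e. real (M e)) (\<lambda>e. real (N e)) \<longrightarrow>
           rless rho K (hsum b (\<lambda>_. 0) N))"
  proof (intro exI conjI allI impI)
    show "hypernat rho M" by (rule M(1))
    fix N assume N: "hypernat rho N" "rle rho (\<lambda>e. real (M e)) (\<lambda>e. real (N e))"
    from M(2)[OF N] obtain m where m: "eventually (\<lambda>e. hsum a (\<lambda>_. 0) N e - (K e + \<bar>A0 e\<bar>) > rho e ^ m) AR"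
      unfolding rless_def by blast
    let ?p = "m + 3"
    have h0: "hypernat rho (\<lambda>_. 0)" and hN0: "hypernat rho (\<lambda>_. N0)" and h1: "hypernat rho (\<lambda>_. 1)"
      using hypernat_const[OF g] by auto
    have hN1: "hypernat rho (\<lambda>e. N e + 1)" by (rule hypernat_add[OF g N(1) h1])
    have hNd: "hypernat rho (\<lambda>e. N e - N0)" by (rule hypernat_diff[OF N(1)])
    have f1: "eventually (\<lambda>e. - (rho e ^ ?p) \<le> (\<Sum>i\<in>{0..N e}. b i e)) AR"
      using hs_le_ev0[OF pb h0 N(1)] by simp
    have f2: "eventually (\<lambda>e. - (rho e ^ ?p) \<le> (\<Sum>i\<in>{0..N0}. b i e)) AR"
      using hs_le_ev0[OF pb h0 hN0] by simp
    have f3: "eventually (\<lambda>e. - (rho e ^ ?p) \<le> (\<Sum>i\<in>{N e + 1..N0}. a i e)) AR"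
      using hs_le_ev0[OF pa hN1 hN0] by simp
    have f4: "eventually (\<lambda>e. (\<Sum>i\<in>{1..N e - N0}. a (i + N0) e) \<le> (\<Sum>i\<in>{1..N e - N0}. b (i + N0) e) + rho e ^ ?p) AR"
      using hs_le_ev[OF sh h1 hNd] by simp
    have "eventually (\<lambda>e. K e < hsum b (\<lambda>_. 0) N e - rho e ^ (m + 1)) AR"
      using m f1 f2 f3 f4 ev_G[OF g]
    proof eventually_elim
      case (elim e)
      define n where "n = N e"
      define Sa where "Sa k = (\<Sum>i\<in>{0..k}. a i e)" for k
      define Sb where "Sb k = (\<Sum>i\<in>{0..k}. b i e)" for k
      have r: "0 < rho e" "rho e \<le> 1/2" using elim by auto
      have claim: "Sb n \<ge> Sa n - \<bar>Sa N0\<bar> - 3 * rho e ^ ?p"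
      proof (cases "n < N0")
        case True
        have "Sa N0 = Sa n + (\<Sum>i\<in>{Suc n..N0}. a i e)"
          unfolding Sa_def by (rule sum_split0) (use True in auto)
        moreover have "- (rho e ^ ?p) \<le> (\<Sum>i\<in>{Suc n..N0}. a i e)" using elim(4) by (simp add: n_def)
        moreover have "- (rho e ^ ?p) \<le> Sb n" using elim(2) by (simp add: n_def Sb_def)
        moreover have "0 \<le> rho e ^ ?p" using r by simp
        ultimately show ?thesis by linarith
      next
        case False
        hence le: "N0 \<le> n" by simp
        have sa: "Sa n = Sa N0 + (\<Sum>i\<in>{Suc N0..n}. a i e)"
          unfolding Sa_def by (rule sum_split0) (use le in auto)
        have sb: "Sb n = Sb N0 + (\<Sum>i\<in>{Suc N0..n}. b i e)"
          unfolding Sb_def by (rule sum_split0) (use le in auto)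
        have ea: "(\<Sum>i\<in>{1..n - N0}. a (i + N0) e) = (\<Sum>i\<in>{Suc N0..n}. a i e)"
          using sum_shift[where f="\<lambda>i. a i e" and m=1 and n="n - N0" and k=N0] le by simp
        have eb: "(\<Sum>i\<in>{1..n - N0}. b (i + N0) e) = (\<Sum>i\<in>{Suc N0..n}. b i e)"
          using sum_shift[where f="\<lambda>i. b i e" and m=1 and n="n - N0" and k=N0] le by simp
        have "(\<Sum>i\<in>{Suc N0..n}. a i e) \<le> (\<Sum>i\<in>{Suc N0..n}. b i e) + rho e ^ ?p"
          using elim(5) ea eb by (simp add: n_def)
        moreover have "- (rho e ^ ?p) \<le> Sb N0" using elim(3) by (simp add: Sb_def)
        moreover have "0 \<le> rho e ^ ?p" using r by simp
        ultimately show ?thesis using sa sb by linarith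
      qed
      have hs: "hsum a (\<lambda>_. 0) N e = Sa n" "hsum b (\<lambda>_. 0) N e = Sb n"
        by (simp_all add: hsum_def Sa_def Sb_def n_def)
      have A0: "A0 e = Sa N0" by (simp add: A0_def Sa_def)
      have p1: "rho e ^ (m + 1) \<le> rho e ^ m / 2"
        by (rule order_trans[OF pw_shift[OF r, of m 1]]) simp
      have p3: "rho e ^ (m + 3) \<le> rho e ^ m / 8"
        by (rule order_trans[OF pw_shift[OF r, of m 3]]) simp
      have pos: "0 < rho e ^ m" using r by simp
      have e1: "rho e ^ m < Sa n - (K e + \<bar>Sa N0\<bar>)" using elim(1) unfolding hs A0 .
      show ?case unfolding hs using claim e1 p1 p3 pos by linarith
    qed
    hence "eventually (\<lambda>e. hsum b (\<lambda>_. 0) N e - K e > rho e ^ (m + 1)) AR"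
      by eventually_elim linarith
    thus "rless rho K (hsum b (\<lambda>_. 0) N)" unfolding rless_def by blast
  qed
qed

lemma part1:
  fixes a b :: "nat \<Rightarrow> real \<Rightarrow> real"
  assumes g: "gauge rho" and ma: "hs_moderate rho a"
    and pa: "hs_le rho (\<lambda>n e. 0) a"
    and sh: "hs_le rho (\<lambda>n e. a (n + N0) e) (\<lambda>n e. b (n + N0) e)"
    and cv: "hs_converges rho b"
  shows "hs_converges rho a"
proof -
  obtain lb where hl: "hyperlim rho (\<lambda>N e. complex_of_real (hsum b (\<lambda>_. 0) N e)) lb"
    using cv unfolding hs_converges_def by blast
  define Sa where "Sa n e = (\<Sum>i\<in>{0..n}. a i e)" for n e
  define Sb where "Sb n e = (\<Sum>i\<in>{0..n}. b i e)" for n e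
  have B1: "\<exists>K. \<forall>k. eventually (\<lambda>e. \<forall>n. 1/rho e^K \<le> real n \<longrightarrow> real n \<le> 1/rho e^k \<longrightarrow>
      cmod (complex_of_real (Sb n e) - lb e) < rho e^q) AR" for q
  proof -
    from hl obtain M where M: "hypernat rho M"
      "\<And>n. hypernat rho n \<Longrightarrow> rle rho (\<lambda>e. real (M e)) (\<lambda>e. real (n e)) \<Longrightarrow>
        rless rho (\<lambda>e. cmod (complex_of_real (hsum b (\<lambda>_. 0) n e) - lb e)) (\<lambda>e. rho e ^ q)"
      unfolding hyperlim_def by blast
    have ev: "eventually (\<lambda>e. M e \<le> n e \<longrightarrow> cmod (complex_of_real (Sb (n e) e) - lb e) < rho e^q) AR"
      if n: "hypernat rho n" for n
    proof -
      define n' where "n' e = max (M e) (n e)" for e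
      have h: "hypernat rho n'" unfolding n'_def by (rule hypernat_max[OF g M(1) n])
      have "rle rho (\<lambda>e. real (M e)) (\<lambda>e. real (n' e))"
        by (rule rle_refl_nat[OF g]) (rule always_eventually, simp add: n'_def)
      from M(2)[OF h this] have "rless rho (\<lambda>e. cmod (complex_of_real (hsum b (\<lambda>_. 0) n' e) - lb e)) (\<lambda>e. rho e ^ q)" .
      from rless_ev[OF g this] show ?thesis
      proof eventually_elim
        case (elim e)
        show ?case
        proof
          assume "M e \<le> n e"
          hence "n' e = n e" by (simp add: n'_def)
          thus "cmod (complex_of_real (Sb (n e) e) - lb e) < rho e^q"
            using elim by (simp add: hsum_def Sb_def)
        qed
      qed
    qed
    obtain K0 where K0: "eventually (\<lambda>e. real (M e) \<le> 1 / rho e ^ K0) AR"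
      using hypernat_ev_bound[OF M(1)] by blast
    show ?thesis
    proof (intro exI allI)
      fix k
      have U: "eventually (\<lambda>e. \<forall>n. real n \<le> 1 / rho e ^ k \<longrightarrow> (M e \<le> n \<longrightarrow> cmod (complex_of_real (Sb n e) - lb e) < rho e^q)) AR"
        by (rule ubiq[OF g, of "\<lambda>n e. M e \<le> n \<longrightarrow> cmod (complex_of_real (Sb n e) - lb e) < rho e^q" k]) (erule ev)
      from U K0
      show "eventually (\<lambda>e. \<forall>n. 1/rho e^K0 \<le> real n \<longrightarrow> real n \<le> 1/rho e^k \<longrightarrow>
          cmod (complex_of_real (Sb n e) - lb e) < rho e^q) AR"
      proof eventually_elim
        case (elim e)
        show ?case
        proof (intro allI impI)
          fix n assume n: "1/rho e^K0 \<le> real n" "real n \<le> 1/rho e^k"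
          hence "M e \<le> n" using elim(2) by linarith
          thus "cmod (complex_of_real (Sb n e) - lb e) < rho e^q" using elim(1) n by blast
        qed
      qed
    qed
  qed
  have B2: "\<exists>K. \<forall>k. eventually (\<lambda>e. \<forall>n m. 1/rho e^K \<le> real n \<longrightarrow> real n \<le> 1/rho e^k \<longrightarrow>
      1/rho e^K \<le> real m \<longrightarrow> real m \<le> 1/rho e^k \<longrightarrow> \<bar>Sb m e - Sb n e\<bar> < 2 * rho e^q) AR" for q
  proof -
    obtain K where K: "\<And>k. eventually (\<lambda>e. \<forall>n. 1/rho e^K \<le> real n \<longrightarrow> real n \<le> 1/rho e^k \<longrightarrow>
      cmod (complex_of_real (Sb n e) - lb e) < rho e^q) AR" using B1[of q] by blast
    show ?thesis
    proof (intro exI allI)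
      fix k
      from K[of k] show "eventually (\<lambda>e. \<forall>n m. 1/rho e^K \<le> real n \<longrightarrow> real n \<le> 1/rho e^k \<longrightarrow>
      1/rho e^K \<le> real m \<longrightarrow> real m \<le> 1/rho e^k \<longrightarrow> \<bar>Sb m e - Sb n e\<bar> < 2 * rho e^q) AR"
      proof eventually_elim
        case (elim e)
        show ?case
        proof (intro allI impI)
          fix n m assume nm: "1/rho e^K \<le> real n" "real n \<le> 1/rho e^k" "1/rho e^K \<le> real m" "real m \<le> 1/rho e^k"
          have eq: "(complex_of_real (Sb m e) - lb e) - (complex_of_real (Sb n e) - lb e) = complex_of_real (Sb m e - Sb n e)"
            by simp
          have "\<bar>Sb m e - Sb n e\<bar> = cmod ((complex_of_real (Sb m e) - lb e) - (complex_of_real (Sb n e) - lb e))"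
            unfolding eq by (rule norm_of_real[symmetric])
          also have "\<dots> \<le> cmod (complex_of_real (Sb m e) - lb e) + cmod (complex_of_real (Sb n e) - lb e)"
            by (rule norm_triangle_ineq4)
          also have "\<dots> < 2 * rho e ^ q"
          proof -
            have "cmod (complex_of_real (Sb m e) - lb e) < rho e ^ q" using elim nm by blast
            moreover have "cmod (complex_of_real (Sb n e) - lb e) < rho e ^ q" using elim nm by blast
            ultimately show ?thesis by linarith
          qed
          finally show "\<bar>Sb m e - Sb n e\<bar> < 2 * rho e^q" .
        qed
      qed
    qed
  qed
  have A1: "eventually (\<lambda>e. \<forall>n m. real n \<le> 1/rho e^k \<longrightarrow> real m \<le> 1/rho e^k \<longrightarrow>
      - (rho e^q) \<le> (\<Sum>i\<in>{n..m}. a i e)) AR" for q k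
    by (rule ubiq2[OF g, of "\<lambda>n m e. - (rho e^q) \<le> (\<Sum>i\<in>{n..m}. a i e)"]) (rule hs_le_ev0[OF pa])
  have A2: "eventually (\<lambda>e. \<forall>n m. real n \<le> 1/rho e^k \<longrightarrow> real m \<le> 1/rho e^k \<longrightarrow>
      (\<Sum>i\<in>{n..m}. a (i + N0) e) \<le> (\<Sum>i\<in>{n..m}. b (i + N0) e) + rho e ^ q) AR" for q k
    by (rule ubiq2[OF g, of "\<lambda>n m e. (\<Sum>i\<in>{n..m}. a (i + N0) e) \<le> (\<Sum>i\<in>{n..m}. b (i + N0) e) + rho e ^ q"])
      (rule hs_le_ev[OF sh])
  have A3: "\<exists>K. \<forall>k. eventually (\<lambda>e. \<forall>n m. 1/rho e^K \<le> real n \<longrightarrow> real n \<le> 1/rho e^k \<longrightarrow>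
      1/rho e^K \<le> real m \<longrightarrow> real m \<le> 1/rho e^k \<longrightarrow> \<bar>Sa m e - Sa n e\<bar> \<le> rho e^q) AR" for q
  proof -
    obtain Kb where Kb: "\<And>k. eventually (\<lambda>e. \<forall>n m. 1/rho e^Kb \<le> real n \<longrightarrow> real n \<le> 1/rho e^k \<longrightarrow>
      1/rho e^Kb \<le> real m \<longrightarrow> real m \<le> 1/rho e^k \<longrightarrow> \<bar>Sb m e - Sb n e\<bar> < 2 * rho e^(q+2)) AR"
      using B2[of "q+2"] by blast
    show ?thesis
    proof (intro exI allI)
      fix k
      have c: "(0::real) < 1 / (real N0 + 2)" by simp
      from Kb[of k] A1[where q="q+2" and k=k] A2[where q="q+2" and k=k] ev_small[OF g c]
      show "eventually (\<lambda>e. \<forall>n m. 1/rho e^Suc Kb \<le> real n \<longrightarrow> real n \<le> 1/rho e^k \<longrightarrow>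
        1/rho e^Suc Kb \<le> real m \<longrightarrow> real m \<le> 1/rho e^k \<longrightarrow> \<bar>Sa m e - Sa n e\<bar> \<le> rho e^q) AR"
      proof eventually_elim
        case (elim e)
        have r: "0 < rho e" "rho e \<le> 1/2" using elim(4) by auto
        have big: "real N0 + 2 \<le> 1/rho e^Suc Kb"
        proof -
          have "real N0 + 2 < 1 / rho e" using elim(4) by (simp add: field_simps)
          also have "1 / rho e = 1 / rho e ^ 1" by simp
          also have "\<dots> \<le> 1/rho e^Suc Kb" using r by (intro pw_mono) auto
          finally show ?thesis by simp
        qed
        have p2: "rho e ^ (q + 2) \<le> rho e ^ q / 4"
          by (rule order_trans[OF pw_shift[OF r, of q 2]]) simp
        have p0: "0 \<le> rho e ^ q" using r by simp
        have mono: "1/rho e^Kb \<le> 1/rho e^Suc Kb" using r by (intro pw_mono) auto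
        have le: "\<bar>Sa m e - Sa n e\<bar> \<le> rho e^q"
          if nm: "1/rho e^Suc Kb \<le> real n" "real n \<le> 1/rho e^k" "1/rho e^Suc Kb \<le> real m" "real m \<le> 1/rho e^k"
            and nlm: "n \<le> m" for n m
        proof (cases "n = m")
          case True then show ?thesis using p0 by simp
        next
          case False
          hence nlm': "n < m" using nlm by simp
          have N0n: "N0 \<le> Suc n" using big nm(1) by linarith
          have sa: "Sa m e - Sa n e = (\<Sum>i\<in>{Suc n..m}. a i e)"
            using sum_split0[of n m "\<lambda>i. a i e"] nlm unfolding Sa_def by simp
          have sb: "Sb m e - Sb n e = (\<Sum>i\<in>{Suc n..m}. b i e)"
            using sum_split0[of n m "\<lambda>i. b i e"] nlm unfolding Sb_def by simp
          have ea: "(\<Sum>i\<in>{Suc n - N0..m - N0}. a (i + N0) e) = (\<Sum>i\<in>{Suc n..m}. a i e)"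
            using sum_shift[where f="\<lambda>i. a i e" and m="Suc n - N0" and n="m - N0" and k=N0] N0n nlm' by simp
          have eb: "(\<Sum>i\<in>{Suc n - N0..m - N0}. b (i + N0) e) = (\<Sum>i\<in>{Suc n..m}. b i e)"
            using sum_shift[where f="\<lambda>i. b i e" and m="Suc n - N0" and n="m - N0" and k=N0] N0n nlm' by simp
          have i1: "real (Suc n - N0) \<le> 1/rho e^k" "real (m - N0) \<le> 1/rho e^k" "real (Suc n) \<le> 1/rho e^k"
            using nm nlm' by (auto simp: of_nat_diff)
          have u: "(\<Sum>i\<in>{Suc n..m}. a i e) \<le> (\<Sum>i\<in>{Suc n..m}. b i e) + rho e ^ (q+2)"
          proof -
            have "(\<Sum>i\<in>{Suc n - N0..m - N0}. a (i + N0) e) \<le> (\<Sum>i\<in>{Suc n - N0..m - N0}. b (i + N0) e) + rho e ^ (q+2)"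
              using elim(3) i1(1,2) by blast
            thus ?thesis unfolding ea eb .
          qed
          have lo: "- (rho e ^ (q+2)) \<le> (\<Sum>i\<in>{Suc n..m}. a i e)"
            using elim(2) i1(3) nm(4) by blast
          have "\<bar>Sb m e - Sb n e\<bar> < 2 * rho e^(q+2)"
            using elim(1) nm mono by (meson order_trans)
          thus ?thesis using sa sb u lo p2 p0 by linarith
        qed
        show ?case
        proof (intro allI impI)
          fix n m assume nm: "1/rho e^Suc Kb \<le> real n" "real n \<le> 1/rho e^k" "1/rho e^Suc Kb \<le> real m" "real m \<le> 1/rho e^k"
          show "\<bar>Sa m e - Sa n e\<bar> \<le> rho e^q"
          proof (cases "n \<le> m")
            case True then show ?thesis using le nm by blast
          next
            case False
            hence "\<bar>Sa n e - Sa m e\<bar> \<le> rho e^q" using le nm by simp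
            thus ?thesis by (simp add: abs_minus_commute)
          qed
        qed
      qed
    qed
  qed
  have H: "rmoderate rho (\<lambda>e. Sa (N e) e)" if "hypernat rho N" for N
    using ma that unfolding hs_moderate_def hsum_def Sa_def by auto
  obtain l where l: "rmoderate rho l" and lc: "\<And>q. \<exists>K. \<forall>k. eventually (\<lambda>e. \<forall>n. 1/rho e^K \<le> real n \<longrightarrow>
             real n \<le> 1/rho e^k \<longrightarrow> \<bar>Sa n e - l e\<bar> \<le> rho e^q) AR"
    using complete[OF g A3 H] by blast
  have lm: "rmoderate rho (\<lambda>e. complex_of_real (l e))"
    by (rule rmod_le[OF l]) (rule always_eventually, simp)
  have "hyperlim rho (\<lambda>N e. complex_of_real (hsum a (\<lambda>_. 0) N e)) (\<lambda>e. complex_of_real (l e))"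
    unfolding hyperlim_def
  proof
    fix q
    obtain K where K: "\<And>k. eventually (\<lambda>e. \<forall>n. 1/rho e^K \<le> real n \<longrightarrow>
             real n \<le> 1/rho e^k \<longrightarrow> \<bar>Sa n e - l e\<bar> \<le> rho e^(q+2)) AR"
      using lc[of "q+2"] by blast
    define M where "M e = nat \<lceil>1 / rho e ^ K\<rceil>" for e
    show "\<exists>M. hypernat rho M \<and> (\<forall>n. hypernat rho n \<longrightarrow> rle rho (\<lambda>e. real (M e)) (\<lambda>e. real (n e)) \<longrightarrow>
        rless rho (\<lambda>e. cmod (complex_of_real (hsum a (\<lambda>_. 0) n e) - complex_of_real (l e))) (\<lambda>e. rho e ^ q))"
    proof (intro exI conjI allI impI)
      show "hypernat rho M" unfolding M_def by (rule hypernat_ceil[OF g])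
      fix n assume n: "hypernat rho n" "rle rho (\<lambda>e. real (M e)) (\<lambda>e. real (n e))"
      obtain k where k: "eventually (\<lambda>e. real (n e) \<le> 1 / rho e ^ k) AR"
        using hypernat_ev_bound[OF n(1)] by blast
      from K[of k] k rle_nat_ev[OF g n(2)] ev_G[OF g]
      have "eventually (\<lambda>e. rho e ^ q - cmod (complex_of_real (hsum a (\<lambda>_. 0) n e) - complex_of_real (l e)) > rho e ^ (q+2)) AR"
      proof eventually_elim
        case (elim e)
        have r: "0 < rho e" "rho e \<le> 1/2" using elim(4) by auto
        have "1 / rho e ^ K \<le> real (M e)" unfolding M_def by (rule ceil_bound(1)[OF r])
        also have "\<dots> \<le> real (n e)" using elim(3) by simp
        finally have "\<bar>Sa (n e) e - l e\<bar> \<le> rho e^(q+2)" using elim(1,2) by blast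
        moreover have "cmod (complex_of_real (hsum a (\<lambda>_. 0) n e) - complex_of_real (l e)) = \<bar>Sa (n e) e - l e\<bar>"
        proof -
          have "complex_of_real (hsum a (\<lambda>_. 0) n e) - complex_of_real (l e) = complex_of_real (Sa (n e) e - l e)"
            by (simp add: hsum_def Sa_def)
          thus ?thesis by (simp only: norm_of_real)
        qed
        moreover have "rho e ^ (q + 2) \<le> rho e ^ q / 4"
          by (rule order_trans[OF pw_shift[OF r, of q 2]]) simp
        moreover have "0 < rho e ^ q" using r by simp
        ultimately show ?case by linarith
      qed
      thus "rless rho (\<lambda>e. cmod (complex_of_real (hsum a (\<lambda>_. 0) n e) - complex_of_real (l e))) (\<lambda>e. rho e ^ q)"
        unfolding rless_def by blast
    qed
  qed
  with lm show ?thesis unfolding hs_converges_def by blast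
qed

theorem theorem2p16:
  fixes rho :: "real \<Rightarrow> real" and a b :: "nat \<Rightarrow> real \<Rightarrow> real"
  assumes "gauge rho"
    and "hs_moderate rho a" and "hs_moderate rho b"
    and "hs_le rho (\<lambda>n e. 0) a" and "hs_le rho (\<lambda>n e. 0) b"
    and "\<exists>N::nat. hs_le rho (\<lambda>n e. a (n + N) e) (\<lambda>n e. b (n + N) e)"
  shows "(hs_converges rho b \<longrightarrow> hs_converges rho a) \<and>
         (hs_diverges_pinf rho a \<longrightarrow> hs_diverges_pinf rho b)"
proof -
  obtain N0 where sh: "hs_le rho (\<lambda>n e. a (n + N0) e) (\<lambda>n e. b (n + N0) e)"
    using assms(6) by blast
  show ?thesis
    using part1[OF assms(1) assms(2) assms(4) sh] part2[OF assms(1) assms(2) assms(4) assms(5) sh]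
    by blast
qed

end
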